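(* Let $a_1,\dots,a_n\in\mathbb{R}^d$ be nonzero vectors. Let $a'_1,\dots,a'_{n'}$ be a second list obtained from the first by either adding one nonzero vector or removing one vector. Fix $T\ge1$, points $x^{(1)},\dots,x^{(T)}\in\mathbb{R}^d$, and a vector $g\in\mathbb{R}^d$. For the first list and each $t\in[T]$, define - $S^{(t)}=\{i:\langle\overline{a}_i,x^{(t)}\rangle\le0\}$ and $m^{(t)}=|S^{(t)}|$, where we assume $m^{(t)}\ge1$; - $\overline{\lambda}_i=\frac1T\sum_{t=1}^T\frac{\mathbf{1}[i\in S^{(t)}]}{m^{(t)}}$ for each $i$; - $P=\{i:\langle\overline{a}_i,g\rangle\ge0\}$ and $c=\sum_{i\in P}\overline{\lambda}_i\overline{a}_i$. Define $S'^{(t)}$, $m'^{(t)}$, $\overline{\lambda}'$, $P'$ and $c'$ in the same way from the second list, with the same $x^{(1)},\dots,x^{(T)}$ and $g$, and assume $m'^{(t)}\ge1$ for all $t$. Let $m=\min_{t\in[T]}\min(m^{(t)},m'^{(t)})$. Then $\|c-c'\|_2\le\frac{2}{m}$.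
   Context: For a nonzero vector $a$, $\overline{a}=a/\|a\|_2$. $\mathbf{1}[\cdot]$ denotes the indicator function. *)

theory Defs
  imports "HOL-Analysis.Analysis"
begin

text \<open>Vectors in R^d are elements of a type of class euclidean_space (d = DIM('a)).
  The normalized vector a/|a| is the library's sgn a = a /R norm a.
  The points x^(1..T) are a function xs :: nat => 'a on {1..T}.\<close>

definition Sset :: "'a::euclidean_space list \<Rightarrow> 'a \<Rightarrow> nat set" where
  "Sset a x = {i. i < length a \<and> inner (sgn (a ! i)) x \<le> 0}"

definition lam_bar :: "'a::euclidean_space list \<Rightarrow> nat \<Rightarrow> (nat \<Rightarrow> 'a) \<Rightarrow> nat \<Rightarrow> real" where
  "lam_bar a T xs i =
     (1 / real T) * (\<Sum>t\<in>{1..T}. (if i \<in> Sset a (xs t) then 1 else 0) / real (card (Sset a (xs t))))"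

definition Pset :: "'a::euclidean_space list \<Rightarrow> 'a \<Rightarrow> nat set" where
  "Pset a g = {i. i < length a \<and> inner (sgn (a ! i)) g \<ge> 0}"

definition cvec :: "'a::euclidean_space list \<Rightarrow> nat \<Rightarrow> (nat \<Rightarrow> 'a) \<Rightarrow> 'a \<Rightarrow> 'a" where
  "cvec a T xs g = (\<Sum>i\<in>Pset a g. lam_bar a T xs i *\<^sub>R sgn (a ! i))"

definition add_or_remove_one :: "'a::euclidean_space list \<Rightarrow> 'a list \<Rightarrow> bool" where
  "add_or_remove_one a a' \<longleftrightarrow>
     (\<exists>k v. k \<le> length a \<and> v \<noteq> 0 \<and> a' = take k a @ [v] @ drop k a) \<or>
     (\<exists>k. k < length a \<and> a' = take k a @ drop (Suc k) a)"

end

theory Submission imports Defs begin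

definition ct :: "'a::euclidean_space list \<Rightarrow> 'a \<Rightarrow> 'a \<Rightarrow> 'a" where
  "ct a x g = (1 / real (length (filter (\<lambda>u. inner (sgn u) x \<le> 0) a))) *\<^sub>R
     sum_list (map (\<lambda>u. if inner (sgn u) x \<le> 0 \<and> inner (sgn u) g \<ge> 0 then sgn u else 0) a)"

lemma card_S: "card (Sset a x) = length (filter (\<lambda>u. inner (sgn u) x \<le> 0) a)"
  unfolding Sset_def by (simp add: length_filter_conv_card)

lemma inner_sum: "(\<Sum>i\<in>Pset a g. ((if i \<in> Sset a x then 1 else 0) / r) *\<^sub>R sgn (a ! i))
   = (1 / r) *\<^sub>R sum_list (map (\<lambda>u. if inner (sgn u) x \<le> 0 \<and> inner (sgn u) g \<ge> 0 then sgn u else 0) a)"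
proof -
  have "(\<Sum>i\<in>Pset a g. ((if i \<in> Sset a x then 1 else 0) / r) *\<^sub>R sgn (a ! i))
      = (\<Sum>i<length a. (1/r) *\<^sub>R (if inner (sgn (a!i)) x \<le> 0 \<and> inner (sgn (a!i)) g \<ge> 0 then sgn (a!i) else 0))"
    unfolding Pset_def Sset_def
    by (rule sum.mono_neutral_cong_left) auto
  also have "\<dots> = (1 / r) *\<^sub>R sum_list (map (\<lambda>u. if inner (sgn u) x \<le> 0 \<and> inner (sgn u) g \<ge> 0 then sgn u else 0) a)"
    by (simp add: scaleR_sum_right sum_list_sum_nth atLeast0LessThan)
  finally show ?thesis .
qed

lemma cvec_eq: "cvec a T xs g = (1 / real T) *\<^sub>R (\<Sum>t\<in>{1..T}. ct a (xs t) g)"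
proof -
  have "cvec a T xs g = (\<Sum>i\<in>Pset a g. (1/real T) *\<^sub>R (\<Sum>t\<in>{1..T}. ((if i \<in> Sset a (xs t) then 1 else 0) / real (card (Sset a (xs t)))) *\<^sub>R sgn (a ! i)))"
    unfolding cvec_def lam_bar_def by (intro sum.cong refl) (simp add: scaleR_sum_left scaleR_sum_right sum_divide_distrib mult.commute)
  also have "\<dots> = (1/real T) *\<^sub>R (\<Sum>t\<in>{1..T}. \<Sum>i\<in>Pset a g. ((if i \<in> Sset a (xs t) then 1 else 0) / real (card (Sset a (xs t)))) *\<^sub>R sgn (a ! i))"
    by (simp add: scaleR_sum_right sum.swap[of _ "Pset a g"])
  also have "\<dots> = (1 / real T) *\<^sub>R (\<Sum>t\<in>{1..T}. ct a (xs t) g)"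
    by (simp add: inner_sum ct_def card_S)
  finally show ?thesis .
qed

lemma norm_sl: "norm (sum_list (map (\<lambda>u. if inner (sgn u) x \<le> 0 \<and> inner (sgn u) g \<ge> 0 then sgn u else (0::'a::euclidean_space)) a))
   \<le> real (length (filter (\<lambda>u. inner (sgn u) x \<le> 0) a))"
proof (induction a)
  case Nil then show ?case by simp
next
  case (Cons u a)
  have "norm (if inner (sgn u) x \<le> 0 \<and> inner (sgn u) g \<ge> 0 then sgn u else 0) \<le> (if inner (sgn u) x \<le> 0 then 1 else 0)"
    by (auto simp: norm_sgn)
  then show ?case using Cons norm_triangle_ineq[of "(if inner (sgn u) x \<le> 0 \<and> inner (sgn u) g \<ge> 0 then sgn u else 0)"
    "sum_list (map (\<lambda>u. if inner (sgn u) x \<le> 0 \<and> inner (sgn u) g \<ge> 0 then sgn u else (0::'a)) a)"]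
    by (auto split: if_splits)
qed

lemma key:
  fixes a :: "'a::euclidean_space list"
  assumes k: "k \<le> length a" and a': "a' = take k a @ [v] @ drop k a"
    and m1: "length (filter (\<lambda>u. inner (sgn u) x \<le> 0) a) \<ge> 1"
  shows "norm (ct a x g - ct a' x g) \<le> 2 / real (min (length (filter (\<lambda>u. inner (sgn u) x \<le> 0) a)) (length (filter (\<lambda>u. inner (sgn u) x \<le> 0) a')))"
proof -
  define h where "h = (\<lambda>u::'a. if inner (sgn u) x \<le> 0 \<and> inner (sgn u) g \<ge> 0 then sgn u else 0)"
  define p where "p = (\<lambda>u::'a. inner (sgn u) x \<le> 0)"
  define s where "s = sum_list (map h a)"
  define m where "m = length (filter p a)"
  have sa: "sum_list (map h a') = s + h v"
  proof -
    have "sum_list (map h (take k a)) + sum_list (map h (drop k a)) = s" unfolding s_def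
      by (metis append_take_drop_id map_append sum_list_append)
    then show ?thesis unfolding a' by (simp add: algebra_simps)
  qed
  have ma: "length (filter p a') = m + (if p v then 1 else 0)"
  proof -
    have "m = length (filter p (take k a)) + length (filter p (drop k a))" unfolding m_def
      by (metis append_take_drop_id filter_append length_append)
    then show ?thesis unfolding a' by simp
  qed
  have ns: "norm s \<le> real m" unfolding s_def m_def h_def p_def by (rule norm_sl)
  have m1': "m \<ge> 1" using m1 unfolding m_def p_def .
  have ct1: "ct a x g = (1 / real m) *\<^sub>R s" unfolding ct_def s_def m_def h_def p_def ..
  have ct2: "ct a' x g = (1 / real (length (filter p a'))) *\<^sub>R (s + h v)"
    unfolding ct_def sa[symmetric] by (simp add: p_def h_def)
  show ?thesis
  proof (cases "p v")
    case False
    then have "h v = 0" unfolding h_def p_def by auto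
    then show ?thesis using False ct1 ct2 ma m1' by (simp add: p_def m_def)
  next
    case True
    have nh: "norm (h v) \<le> 1" unfolding h_def by (auto simp: norm_sgn)
    have "ct a x g - ct a' x g = (1 / (real m * (real m + 1))) *\<^sub>R s - (1 / (real m + 1)) *\<^sub>R h v"
    proof -
      have c2: "ct a' x g = (1 / (real m + 1)) *\<^sub>R (s + h v)" using ct2 ma True by simp
      have e: "1 / real m - 1 / (real m + 1) = 1 / (real m * (real m + 1))" using m1' by (simp add: field_simps)
      have "ct a x g - ct a' x g = (1 / real m - 1 / (real m + 1)) *\<^sub>R s - (1 / (real m + 1)) *\<^sub>R h v"
        unfolding ct1 c2 by (simp add: scaleR_diff_left scaleR_add_right)
      then show ?thesis unfolding e .
    qed
    also have "norm \<dots> \<le> (1 / (real m * (real m + 1))) * real m + 1 / (real m + 1)"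
    proof -
      have "norm ((1 / (real m * (real m + 1))) *\<^sub>R s) \<le> (1 / (real m * (real m + 1))) * real m"
      proof -
        have "norm s / (real m * (real m + 1)) \<le> real m / (real m * (real m + 1))"
          using ns by (rule divide_right_mono) simp
        then show ?thesis by simp
      qed
      moreover have "norm ((1 / (real m + 1)) *\<^sub>R h v) \<le> 1 / (real m + 1)"
        using nh by (simp add: divide_le_cancel)
      ultimately show ?thesis using norm_triangle_ineq4[of "(1 / (real m * (real m + 1))) *\<^sub>R s" "(1 / (real m + 1)) *\<^sub>R h v"]
        by linarith
    qed
    also have "\<dots> = 2 / (real m + 1)"
    proof -
      have "real m > 0" using m1' by simp
      then have "(1 / (real m * (real m + 1))) * real m = 1 / (real m + 1)" by simp
      then show ?thesis by simp
    qed
    also have "\<dots> \<le> 2 / real m" using m1' by (simp add: frac_le)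
    finally show ?thesis using ma True by (simp add: p_def m_def)
  qed
qed

lemma pert:
  fixes a :: "'a::euclidean_space list"
  assumes "add_or_remove_one a a'"
    and "card (Sset a x) \<ge> 1" and "card (Sset a' x) \<ge> 1"
  shows "norm (ct a x g - ct a' x g) \<le> 2 / real (min (card (Sset a x)) (card (Sset a' x)))"
  using assms(1) unfolding add_or_remove_one_def
proof (elim disjE exE conjE)
  fix k v assume "k \<le> length a" "v \<noteq> 0" "a' = take k a @ [v] @ drop k a"
  then show ?thesis using key[of k a a' v x g] assms(2) by (simp add: card_S)
next
  fix k assume k: "k < length a" and a': "a' = take k a @ drop (Suc k) a"
  have k': "k \<le> length a'" using k a' by simp
  have "a = take k a' @ [a ! k] @ drop k a'" using k a' by (simp add: id_take_nth_drop)
  then have "norm (ct a' x g - ct a x g) \<le> 2 / real (min (card (Sset a' x)) (card (Sset a x)))"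
    using key[of k a' a "a ! k" x g] k' assms(3) by (simp add: card_S)
  then show ?thesis by (simp add: norm_minus_commute min.commute)
qed

theorem claim3p5:
  fixes a a' :: "'a::euclidean_space list" and T :: nat and xs :: "nat \<Rightarrow> 'a" and g :: 'a
  assumes "\<forall>i<length a. a ! i \<noteq> 0"
    and "add_or_remove_one a a'"
    and "T \<ge> 1"
    and "\<forall>t\<in>{1..T}. card (Sset a (xs t)) \<ge> 1"
    and "\<forall>t\<in>{1..T}. card (Sset a' (xs t)) \<ge> 1"
  shows "norm (cvec a T xs g - cvec a' T xs g)
           \<le> 2 / real (Min ((\<lambda>t. min (card (Sset a (xs t))) (card (Sset a' (xs t)))) ` {1..T}))"
proof -
  define f where "f = (\<lambda>t. min (card (Sset a (xs t))) (card (Sset a' (xs t))))"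
  define M where "M = Min (f ` {1..T})"
  have ne: "f ` {1..T} \<noteq> {}" using assms(3) by auto
  have "M \<in> f ` {1..T}" unfolding M_def using ne by (intro Min_in) auto
  then have M1: "M \<ge> 1" using assms(4,5) unfolding f_def by auto
  have bnd: "norm (ct a (xs t) g - ct a' (xs t) g) \<le> 2 / real M" if t: "t \<in> {1..T}" for t
  proof -
    have "M \<le> f t" unfolding M_def using t by (intro Min_le) auto
    have "norm (ct a (xs t) g - ct a' (xs t) g) \<le> 2 / real (f t)"
      unfolding f_def using pert[OF assms(2)] assms(4,5) t by blast
    also have "\<dots> \<le> 2 / real M" using \<open>M \<le> f t\<close> M1 by (simp add: frac_le)
    finally show ?thesis .
  qed
  have "cvec a T xs g - cvec a' T xs g = (1 / real T) *\<^sub>R (\<Sum>t\<in>{1..T}. ct a (xs t) g - ct a' (xs t) g)"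
    by (simp add: cvec_eq sum_subtractf scaleR_diff_right)
  then have "norm (cvec a T xs g - cvec a' T xs g) = (1 / real T) * norm (\<Sum>t\<in>{1..T}. ct a (xs t) g - ct a' (xs t) g)"
    by simp
  also have "\<dots> \<le> (1 / real T) * (\<Sum>t\<in>{1..T}. 2 / real M)"
    by (intro mult_left_mono order.trans[OF norm_sum sum_mono] bnd) auto
  also have "\<dots> = 2 / real M" using assms(3) by simp
  finally show ?thesis unfolding M_def f_def .
qed

end
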